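(* Let $F=\begin{pmatrix}-1&-1&-1\\-1&8&-1\\-1&-1&-1\end{pmatrix}$ (edge detect C filter). Then the equation $F*X=B$ with the zero boundary condition, for unknown $X\in\mathbb{R}^{m\times n}$, has a unique solution for every $B\in\mathbb{R}^{m\times n}$ (for all $m,n\in\mathbb{N}$).
   Context: For $F=[f_{ij}]\in\mathbb{R}^{3\times3}$ and $X=[x_{ij}]\in\mathbb{R}^{m\times n}$, the convolution $F*X\in\mathbb{R}^{m\times n}$ is defined by $[F*X]_{ij}=\sum_{l_1=1}^3\sum_{l_2=1}^3 f_{l_1l_2}\,x_{i-l_1+2,\,j-l_2+2}$ for $1\le i\le m$, $1\le j\le n$, where under the zero boundary condition all values $x_{ij}$ with $i\in\{0,m+1\}$ or $j\in\{0,n+1\}$ are $0$. *)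

theory Defs
  imports Complex_Main
begin

text \<open>An m x n real matrix is represented as a function nat => nat => real
  with entries indexed by 1..m, 1..n; all entries outside this index range are 0.
  This built-in zero padding realises the zero boundary condition.\<close>

definition rmat :: "nat \<Rightarrow> nat \<Rightarrow> (nat \<Rightarrow> nat \<Rightarrow> real) set" where
  "rmat m n = {X. \<forall>i j. \<not> (1 \<le> i \<and> i \<le> m \<and> 1 \<le> j \<and> j \<le> n) \<longrightarrow> X i j = 0}"

definition xval :: "nat \<Rightarrow> nat \<Rightarrow> (nat \<Rightarrow> nat \<Rightarrow> real) \<Rightarrow> int \<Rightarrow> int \<Rightarrow> real" where
  "xval m n X a b = (if 1 \<le> a \<and> a \<le> int m \<and> 1 \<le> b \<and> b \<le> int n then X (nat a) (nat b) else 0)"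

definition conv3 :: "nat \<Rightarrow> nat \<Rightarrow> (nat \<Rightarrow> nat \<Rightarrow> real) \<Rightarrow> (nat \<Rightarrow> nat \<Rightarrow> real) \<Rightarrow> (nat \<Rightarrow> nat \<Rightarrow> real)" where
  "conv3 m n F X = (\<lambda>i j. if 1 \<le> i \<and> i \<le> m \<and> 1 \<le> j \<and> j \<le> n then
     (\<Sum>l1=1..3. \<Sum>l2=1..3. F l1 l2 * xval m n X (int i - int l1 + 2) (int j - int l2 + 2))
   else 0)"

definition edgeC :: "nat \<Rightarrow> nat \<Rightarrow> real" where
  "edgeC i j = (if i = 2 \<and> j = 2 then 8 else -1)"

end

theory Submission imports Defs "HOL-Library.Function_Algebras" begin

definition sc :: "real \<Rightarrow> (nat\<Rightarrow>nat\<Rightarrow>real) \<Rightarrow> (nat\<Rightarrow>nat\<Rightarrow>real)" where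
  "sc c X = (\<lambda>i j. c * X i j)"

lemma vs: "vector_space sc"
  by unfold_locales (auto simp: sc_def fun_eq_iff algebra_simps)

lemma xval_add: "xval m n (X + Y) a b = xval m n X a b + xval m n Y a b"
  by (simp add: xval_def)
lemma xval_sc: "xval m n (\<lambda>i j. c * X i j) a b = c * xval m n X a b"
  by (simp add: xval_def)

lemma conv_add: "conv3 m n F (X + Y) = conv3 m n F X + conv3 m n F Y"
  by (simp add: conv3_def fun_eq_iff xval_add distrib_left sum.distrib)
lemma conv_sc: "conv3 m n F (\<lambda>i j. c * X i j) = (\<lambda>i j. c * conv3 m n F X i j)"
  by (simp add: conv3_def fun_eq_iff xval_sc sc_def sum_distrib_left mult_ac)

lemma lin: "Vector_Spaces.linear sc sc (conv3 m n F)"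
proof -
  interpret vector_space sc by (rule vs)
  show ?thesis
    by unfold_locales (auto simp: conv_add conv_sc sc_def algebra_simps fun_eq_iff)
qed

lemma conv_explicit:
  assumes "1 \<le> i" "i \<le> m" "1 \<le> j" "j \<le> n"
  shows "conv3 m n edgeC X i j = 8 * xval m n X (int i) (int j) -
    (xval m n X (int i - 1) (int j - 1) + xval m n X (int i - 1) (int j) + xval m n X (int i - 1) (int j + 1)
   + xval m n X (int i) (int j - 1) + xval m n X (int i) (int j + 1)
   + xval m n X (int i + 1) (int j - 1) + xval m n X (int i + 1) (int j) + xval m n X (int i + 1) (int j + 1))"
proof -
  have e: "{1..3::nat} = {1,2,3}" by auto
  show ?thesis using assms unfolding conv3_def e by (simp add: edgeC_def algebra_simps)
qed

lemma sum_app2: "(sum f A) (i::nat) (j::nat) = (\<Sum>p\<in>A. f p i j)" for f :: "'a \<Rightarrow> nat \<Rightarrow> nat \<Rightarrow> real"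
  by (induction A rule: infinite_finite_induct) auto

lemma conv_rmat: "conv3 m n F X \<in> rmat m n"
  by (simp add: rmat_def conv3_def)

lemma xval_bound:
  assumes "X \<in> rmat m n" "\<And>i j. 1 \<le> i \<Longrightarrow> i \<le> m \<Longrightarrow> 1 \<le> j \<Longrightarrow> j \<le> n \<Longrightarrow> \<bar>X i j\<bar> \<le> M" "0 \<le> M"
  shows "\<bar>xval m n X a b\<bar> \<le> M"
  using assms(2)[of "nat a" "nat b"] assms(3) by (auto simp: xval_def)

lemma kernel:
  assumes X: "X \<in> rmat m n" and L: "conv3 m n edgeC X = 0"
  shows "X = 0"
proof (rule ccontr)
  assume "X \<noteq> 0"
  then obtain i j where ij: "X i j \<noteq> 0" by (auto simp: fun_eq_iff)
  have ijI: "1 \<le> i \<and> i \<le> m \<and> 1 \<le> j \<and> j \<le> n" using X ij by (auto simp: rmat_def)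
  define I where "I = {1..m} \<times> {1..n}"
  define M where "M = Max ((\<lambda>(a,b). \<bar>X a b\<bar>) ` I)"
  have finI: "finite I" by (simp add: I_def)
  have le: "\<bar>X a b\<bar> \<le> M" if "1 \<le> a" "a \<le> m" "1 \<le> b" "b \<le> n" for a b
    unfolding M_def using finI that by (intro Max_ge) (auto simp: I_def)
  have Mpos: "0 < M" using le[of i j] ijI ij by auto
  define P where "P = {p\<in>I. \<bar>X (fst p) (snd p)\<bar> = M}"
  have finP: "finite P" using finI by (simp add: P_def)
  have "M \<in> (\<lambda>(a,b). \<bar>X a b\<bar>) ` I" unfolding M_def using finI ijI
    by (intro Max_in) (auto simp: I_def)
  then have Pne: "P \<noteq> {}" by (auto simp: P_def)
  define i0 where "i0 = Min (fst ` P)"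
  have "i0 \<in> fst ` P" unfolding i0_def using finP Pne by (intro Min_in) auto
  then obtain j0 where p0: "(i0, j0) \<in> P" by force
  have minP: "i0 \<le> a" if "(a,b) \<in> P" for a b
    unfolding i0_def using finP that by (intro Min_le) force+
  have r: "1 \<le> i0" "i0 \<le> m" "1 \<le> j0" "j0 \<le> n" "\<bar>X i0 j0\<bar> = M"
    using p0 by (auto simp: P_def I_def)
  have bd: "\<bar>xval m n X a b\<bar> \<le> M" for a b
    using xval_bound[OF X le] Mpos by auto
  have x0: "xval m n X (int i0) (int j0) = X i0 j0" using r by (simp add: xval_def)
  have eq: "conv3 m n edgeC X i0 j0 = 0" using L by simp
  note ex = conv_explicit[OF r(1-4), of X, unfolded eq x0]
  have "\<bar>xval m n X (int i0 - 1) (int j0)\<bar> = M"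
    using ex r(5) bd[of "int i0 - 1" "int j0 - 1"] bd[of "int i0 - 1" "int j0"] bd[of "int i0 - 1" "int j0 + 1"]
      bd[of "int i0" "int j0 - 1"] bd[of "int i0" "int j0 + 1"]
      bd[of "int i0 + 1" "int j0 - 1"] bd[of "int i0 + 1" "int j0"] bd[of "int i0 + 1" "int j0 + 1"]
    by (simp add: abs_le_iff abs_if split: if_splits) linarith?
  then show False
  proof (cases "i0 = 1")
    case True
    then show ?thesis using \<open>\<bar>xval m n X (int i0 - 1) (int j0)\<bar> = M\<close> Mpos by (simp add: xval_def)
  next
    case False
    then have "xval m n X (int i0 - 1) (int j0) = X (i0 - 1) j0" using r
      by (simp add: xval_def of_nat_diff nat_diff_distrib)
    then have "(i0 - 1, j0) \<in> P" using False r \<open>\<bar>xval m n X (int i0 - 1) (int j0)\<bar> = M\<close>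
      by (auto simp: P_def I_def)
    then show ?thesis using minP False r by fastforce
  qed
qed


lemma rmat_subspace: "Modules.module.subspace sc (rmat m n)"
proof -
  interpret vector_space sc by (rule vs)
  show ?thesis unfolding subspace_def by (auto simp: rmat_def sc_def)
qed

theorem corollary13:
  fixes m n :: nat
  shows "\<forall>B \<in> rmat m n. \<exists>!X. X \<in> rmat m n \<and> conv3 m n edgeC X = B"
proof -
  interpret V: vector_space sc by (rule vs)
  interpret lin: Vector_Spaces.linear sc sc "conv3 m n edgeC" by (rule lin)
  let ?L = "conv3 m n edgeC"
  let ?S = "rmat m n"
  define I where "I = {1..m} \<times> {1..n}"
  define e where "e = (\<lambda>(a::nat,b::nat). (\<lambda>i j. if i = a \<and> j = b then 1 else 0) :: nat \<Rightarrow> nat \<Rightarrow> real)"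
  have finE: "finite (e ` I)" by (simp add: I_def)
  have SE: "?S \<subseteq> V.span (e ` I)"
  proof
    fix X assume X: "X \<in> ?S"
    have "X = (\<Sum>p\<in>I. sc (X (fst p) (snd p)) (e p))"
    proof (rule ext, rule ext)
      fix i j
      have "(\<Sum>p\<in>I. sc (X (fst p) (snd p)) (e p)) i j = (\<Sum>p\<in>I. if p = (i,j) then X i j else 0)"
        unfolding sum_app2 by (intro sum.cong) (auto simp: sc_def e_def split: if_splits)
      also have "\<dots> = X i j" using X by (auto simp: I_def rmat_def)
      finally show "X i j = (\<Sum>p\<in>I. sc (X (fst p) (snd p)) (e p)) i j" by simp
    qed
    also have "\<dots> \<in> V.span (e ` I)"
      by (intro V.span_sum V.span_scale V.span_base imageI)
    finally show "X \<in> V.span (e ` I)" .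
  qed
  obtain Bs where Bs: "Bs \<subseteq> ?S" "V.independent Bs" "?S \<subseteq> V.span Bs"
    using V.maximal_independent_subset by blast
  have finB: "finite Bs" using V.independent_span_bound[OF finE Bs(2)] Bs(1) SE by blast
  have spanB: "V.span Bs = ?S"
    using Bs V.span_minimal[OF Bs(1) rmat_subspace] by blast
  have inj: "inj_on ?L ?S"
  proof (rule inj_onI)
    fix X Y assume XY: "X \<in> ?S" "Y \<in> ?S" "?L X = ?L Y"
    have "X - Y \<in> ?S" using XY by (auto simp: rmat_def)
    moreover have "?L (X - Y) = 0" using XY lin.diff by simp
    ultimately have "X - Y = 0" by (rule kernel)
    then show "X = Y" by simp
  qed
  have surj: "?L ` ?S = ?S"
  proof (rule ccontr)
    have sub: "?L ` ?S \<subseteq> ?S" using conv_rmat by blast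
    assume "?L ` ?S \<noteq> ?S"
    then obtain B where B: "B \<in> ?S" "B \<notin> ?L ` ?S" using sub by blast
    have indL: "V.independent (?L ` Bs)"
      using lin.independent_injective_image[OF Bs(2)] inj spanB by simp
    have spL: "V.span (?L ` Bs) = ?L ` ?S" using lin.span_image spanB by simp
    have "V.independent (insert B (?L ` Bs))"
      using V.independent_insertI[OF _ indL] B spL by simp
    moreover have "insert B (?L ` Bs) \<subseteq> V.span Bs" using B sub Bs spanB by auto
    ultimately have "card (insert B (?L ` Bs)) \<le> card Bs"
      using V.independent_span_bound[OF finB] by blast
    moreover have "card (?L ` Bs) = card Bs"
      using card_image inj_on_subset[OF inj Bs(1)] by blast
    moreover have "B \<notin> ?L ` Bs" using B Bs(1) by blast
    ultimately show False using finB by simp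
  qed
  show ?thesis
  proof
    fix B assume "B \<in> ?S"
    then obtain X where "X \<in> ?S" "?L X = B" using surj by force
    then show "\<exists>!X. X \<in> ?S \<and> ?L X = B" using inj by (auto dest: inj_onD)
  qed
qed

end
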